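(* Let $A\in\mathbb{C}^{n\times n}$ and $r\in\mathbb{R}$. Then the vertically projected Davis-Wielandt shell $\mathcal{W}_{\ge r}(A)$ is compact and convex.
   Context: The Davis-Wielandt shell of $A$ is $\mathcal{DW}(A)=\{(\mathrm{Re}\,x^*Ax,\ \mathrm{Im}\,x^*Ax,\ \|Ax\|^2): x\in\mathbb{C}^n,\|x\|=1\}\subset\mathbb{R}^3$. For $r\in\mathbb{R}$, the vertically projected DW-shell is $\mathcal{W}_{\ge r}(A)=\{(p,q)\in\mathbb{R}^2: (p,q,h^2)\in\mathcal{DW}(A)\text{ for some } h\ge r\}$ (it is empty when $r$ exceeds the largest singular value of $A$). *)

theory Defs
  imports "HOL-Analysis.Analysis"
begin

definition cquad_form :: "complex^'n^'n \<Rightarrow> complex^'n \<Rightarrow> complex" where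
  "cquad_form A x = (\<Sum>i\<in>UNIV. cnj (x $ i) * (A *v x) $ i)"

definition DW_shell :: "complex^'n^'n \<Rightarrow> (real \<times> real \<times> real) set" where
  "DW_shell A = {(Re (cquad_form A x), Im (cquad_form A x), (norm (A *v x))\<^sup>2) | x. norm x = 1}"

definition W_ge :: "real \<Rightarrow> complex^'n^'n \<Rightarrow> (real \<times> real) set" where
  "W_ge r A = {(p, q). \<exists>h. h \<ge> r \<and> (p, q, h\<^sup>2) \<in> DW_shell A}"

end

theory Submission imports Defs begin

lemma kernel_nonzero:
  fixes f :: "real \<times> real \<times> real \<Rightarrow> complex"
  assumes "linear f"
  shows "\<exists>d. d \<noteq> 0 \<and> f d = 0"
proof (rule ccontr)
  assume "\<not> ?thesis"
  hence inj: "inj f" using assms by (metis linear_injective_0)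
  define g where "g = (\<lambda>s. (Re (f s), Im (f s), 0::real))"
  have lg: "linear g"
  proof (rule linearI)
    fix x y show "g (x + y) = g x + g y" using linear_add[OF assms, of x y] unfolding g_def by simp
  next
    fix c x show "g (c *\<^sub>R x) = c *\<^sub>R g x" using linear_scale[OF assms, of c x] unfolding g_def by simp
  qed
  have "inj g"
  proof (rule injI)
    fix x y assume "g x = g y"
    hence "f x = f y" unfolding g_def by (simp add: complex_eq_iff)
    thus "x = y" using inj by (simp add: inj_eq)
  qed
  hence "surj g" by (rule linear_inj_imp_surj[OF lg])
  from surjD[OF this, of "(0,0,1)"] obtain s where "(0,0,1) = g s" by blast
  thus False unfolding g_def by simp
qed

definition qf :: "real \<times> real \<times> real \<Rightarrow> real" where
  "qf s = (fst (snd s))\<^sup>2 + (snd (snd s))\<^sup>2 + (fst s)\<^sup>2 - fst s"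

lemma qf_convex:
  assumes "qf u = 0" "qf v = 0" "0 \<le> t" "t \<le> 1"
  shows "qf ((1-t) *\<^sub>R u + t *\<^sub>R v) \<le> 0"
proof -
  obtain P1 X1 Y1 where u: "u = (P1,X1,Y1)" by (cases u) auto
  obtain P2 X2 Y2 where v: "v = (P2,X2,Y2)" by (cases v) auto
  have id: "qf ((1-t) *\<^sub>R u + t *\<^sub>R v) = (1-t) * qf u + t * qf v
     - t*(1-t)*((P1-P2)\<^sup>2 + (X1-X2)\<^sup>2 + (Y1-Y2)\<^sup>2)"
    unfolding u v qf_def by (simp add: power2_eq_square algebra_simps)
  have "0 \<le> t*(1-t)*((P1-P2)\<^sup>2 + (X1-X2)\<^sup>2 + (Y1-Y2)\<^sup>2)"
    using assms by (intro mult_nonneg_nonneg) auto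
  thus ?thesis using id assms by simp
qed

lemma geom:
  fixes F :: "real \<times> real \<times> real \<Rightarrow> complex" and G :: "real \<times> real \<times> real \<Rightarrow> real"
  assumes lF: "linear F" and lG: "linear G" and u: "qf u = 0" and v: "qf v = 0"
    and t: "0 \<le> t" "t \<le> 1"
  shows "\<exists>s. qf s = 0 \<and> F s = F ((1-t) *\<^sub>R u + t *\<^sub>R v) \<and> G ((1-t) *\<^sub>R u + t *\<^sub>R v) \<le> G s"
proof -
  define s0 where "s0 = (1-t) *\<^sub>R u + t *\<^sub>R v"
  have q0: "qf s0 \<le> 0" unfolding s0_def using qf_convex[OF u v t] .
  obtain d0 where d0: "d0 \<noteq> 0" "F d0 = 0" using kernel_nonzero[OF lF] by blast
  define d where "d = (if G d0 \<ge> 0 then d0 else -d0)"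
  have dnz: "d \<noteq> 0" using d0 unfolding d_def by auto
  have Fd: "F d = 0" using d0 linear_neg[OF lF] unfolding d_def by auto
  have Gd: "G d \<ge> 0" using linear_neg[OF lG, of d0] unfolding d_def by auto
  obtain P0 X0 Y0 where s0e: "s0 = (P0,X0,Y0)" by (cases s0) auto
  obtain dP dX dY where de: "d = (dP,dX,dY)" by (cases d) auto
  define a where "a = dP\<^sup>2 + dX\<^sup>2 + dY\<^sup>2"
  define b where "b = 2*P0*dP - dP + 2*X0*dX + 2*Y0*dY"
  define c where "c = qf s0"
  have nz3: "dP \<noteq> 0 \<or> dX \<noteq> 0 \<or> dY \<noteq> 0" using dnz de by (auto simp: zero_prod_def)
  have apos: "a > 0"
  proof -
    have h: "dP\<^sup>2 \<ge> 0" "dX\<^sup>2 \<ge> 0" "dY\<^sup>2 \<ge> 0" by auto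
    from nz3 have "dP\<^sup>2 > 0 \<or> dX\<^sup>2 > 0 \<or> dY\<^sup>2 > 0" by auto
    thus ?thesis using h unfolding a_def by linarith
  qed
  have hq: "qf (s0 + l *\<^sub>R d) = a * l\<^sup>2 + b * l + c" for l
    unfolding a_def b_def c_def s0e de qf_def by (simp add: power2_eq_square algebra_simps)
  define L where "L = (\<bar>b\<bar> - c) / a + 1"
  have c0: "c \<le> 0" using q0 c_def by simp
  have L1: "L \<ge> 1" unfolding L_def using apos c0 by (simp add: field_simps)
  have aL: "a * L = \<bar>b\<bar> - c + a" unfolding L_def using apos by (simp add: field_simps)
  have "a * L\<^sup>2 + b * L + c \<ge> 0"
  proof -
    have "b * L \<ge> - \<bar>b\<bar> * L" using L1 by (smt (verit) mult_minus_left abs_ge_minus_self mult_right_mono)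
    have "a * L\<^sup>2 = L * (a * L)" by (simp add: power2_eq_square)
    hence "a * L\<^sup>2 = L * (\<bar>b\<bar> - c + a)" using aL by simp
    hence "a * L\<^sup>2 + b * L + c \<ge> L * (\<bar>b\<bar> - c + a) - \<bar>b\<bar> * L + c" using \<open>b * L \<ge> _\<close> by linarith
    moreover have "L * (\<bar>b\<bar> - c + a) - \<bar>b\<bar> * L + c = L * (a - c) + c" by (simp add: algebra_simps)
    moreover have "L * (a - c) \<ge> a - c" using mult_right_mono[of 1 L "a-c"] L1 apos c0 by simp
    ultimately show ?thesis using apos c0 by linarith
  qed
  moreover have "continuous_on {0..L} (\<lambda>l. a * l\<^sup>2 + b * l + c)"
    by (intro continuous_intros)
  ultimately obtain l where l: "0 \<le> l" "l \<le> L" "a * l\<^sup>2 + b * l + c = 0"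
    using IVT'[of "\<lambda>l. a * l\<^sup>2 + b * l + c" 0 0 L] c0 L1 by auto
  define s where "s = s0 + l *\<^sub>R d"
  have "qf s = 0" unfolding s_def hq using l by simp
  moreover have "F s = F s0" unfolding s_def using linear_add[OF lF] linear_scale[OF lF] Fd by simp
  moreover have "G s0 \<le> G s" unfolding s_def using linear_add[OF lG] linear_scale[OF lG] Gd l by simp
  ultimately show ?thesis unfolding s0_def by blast
qed


definition sesq :: "complex^'n \<Rightarrow> complex^'n \<Rightarrow> complex" where
  "sesq u v = (\<Sum>i\<in>UNIV. cnj (u $ i) * v $ i)"

lemma sesq_cnj: "sesq v u = cnj (sesq u v)"
  by (simp add: sesq_def cnj_sum mult.commute)

lemma sesq_self: "sesq u u = of_real ((norm u)\<^sup>2)"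
proof -
  have "(norm u)\<^sup>2 = (\<Sum>i\<in>UNIV. (cmod (u $ i))\<^sup>2)"
    unfolding norm_vec_def L2_set_def by (simp add: sum_nonneg)
  hence "of_real ((norm u)\<^sup>2) = (\<Sum>i\<in>UNIV. complex_of_real ((cmod (u $ i))\<^sup>2))" by simp
  also have "\<dots> = sesq u u" unfolding sesq_def complex_norm_square
    by (simp add: mult.commute)
  finally show ?thesis by simp
qed

lemma sesq_lin_left: "sesq (a *s u + b *s v) w = cnj a * sesq u w + cnj b * sesq v w"
  by (simp add: sesq_def sum.distrib sum_distrib_left algebra_simps)

lemma sesq_lin_right: "sesq w (a *s u + b *s v) = a * sesq w u + b * sesq w v"
  by (simp add: sesq_def sum.distrib sum_distrib_left algebra_simps)

lemma mv_lin: "(A::complex^'n^'n) *v (a *s u + b *s v) = a *s (A *v u) + b *s (A *v v)"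
  by (simp add: vec_eq_iff matrix_vector_mult_def sum.distrib sum_distrib_left algebra_simps)

lemma sesq_expand:
  "sesq (a *s u + b *s v) (a *s u' + b *s v') =
     cnj a * a * sesq u u' + cnj a * b * sesq u v' + cnj b * a * sesq v u' + cnj b * b * sesq v v'"
  by (simp add: sesq_lin_left sesq_lin_right algebra_simps)

lemma cquad_sesq: "cquad_form A x = sesq x (A *v x)"
  by (simp add: cquad_form_def sesq_def)

definition phi :: "complex \<Rightarrow> complex \<Rightarrow> complex \<Rightarrow> complex \<Rightarrow> real \<times> real \<times> real \<Rightarrow> complex" where
  "phi k11 k12 k21 k22 s = of_real (fst s) * k11 + Complex (fst (snd s)) (snd (snd s)) * k12
     + cnj (Complex (fst (snd s)) (snd (snd s))) * k21 + of_real (1 - fst s) * k22"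

definition linphi :: "complex \<Rightarrow> complex \<Rightarrow> complex \<Rightarrow> complex \<Rightarrow> real \<times> real \<times> real \<Rightarrow> complex" where
  "linphi k11 k12 k21 k22 s = of_real (fst s) * (k11 - k22) + Complex (fst (snd s)) (snd (snd s)) * k12
     + cnj (Complex (fst (snd s)) (snd (snd s))) * k21"

lemma phi_eq: "phi k11 k12 k21 k22 s = k22 + linphi k11 k12 k21 k22 s"
  by (simp add: phi_def linphi_def algebra_simps)

lemma linphi_linear: "linear (linphi k11 k12 k21 k22)"
proof (rule linearI)
  fix x y :: "real \<times> real \<times> real"
  show "linphi k11 k12 k21 k22 (x + y) = linphi k11 k12 k21 k22 x + linphi k11 k12 k21 k22 y"
    by (simp add: linphi_def complex_eq_iff algebra_simps)
next
  fix c :: real and x :: "real \<times> real \<times> real"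
  show "linphi k11 k12 k21 k22 (c *\<^sub>R x) = c *\<^sub>R linphi k11 k12 k21 k22 x"
    by (simp add: linphi_def complex_eq_iff algebra_simps)
qed

lemma Re_linear: "linear f \<Longrightarrow> linear (\<lambda>s. Re (f s :: complex))"
  by (rule linearI) (simp_all add: linear_add linear_scale)

lemma phi_affine:
  "phi k11 k12 k21 k22 ((1-t) *\<^sub>R u + t *\<^sub>R v) =
     of_real (1-t) * phi k11 k12 k21 k22 u + of_real t * phi k11 k12 k21 k22 v"
  by (simp add: phi_def complex_eq_iff algebra_simps)

definition bloch :: "complex \<Rightarrow> complex \<Rightarrow> real \<times> real \<times> real" where
  "bloch a b = ((cmod a)\<^sup>2, Re (cnj a * b), Im (cnj a * b))"

lemma bloch_sph:
  assumes "(cmod a)\<^sup>2 + (cmod b)\<^sup>2 = 1"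
  shows "qf (bloch a b) = 0"
proof -
  have h: "(Re (cnj a * b))\<^sup>2 + (Im (cnj a * b))\<^sup>2 = (cmod (cnj a * b))\<^sup>2"
    by (simp add: cmod_power2)
  also have "\<dots> = (cmod a)\<^sup>2 * (cmod b)\<^sup>2" by (simp add: norm_mult power_mult_distrib)
  finally have h2: "(Re (cnj a * b))\<^sup>2 + (Im (cnj a * b))\<^sup>2 = (cmod a)\<^sup>2 * (cmod b)\<^sup>2" .
  have "qf (bloch a b) = (Re (cnj a * b))\<^sup>2 + (Im (cnj a * b))\<^sup>2 + ((cmod a)\<^sup>2)\<^sup>2 - (cmod a)\<^sup>2"
    by (simp only: qf_def bloch_def fst_conv snd_conv)
  also have "\<dots> = (cmod a)\<^sup>2 * (cmod b)\<^sup>2 + ((cmod a)\<^sup>2)\<^sup>2 - (cmod a)\<^sup>2" using h2 by simp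
  also have "\<dots> = (cmod a)\<^sup>2 * ((cmod a)\<^sup>2 + (cmod b)\<^sup>2 - 1)" by (simp add: power2_eq_square algebra_simps)
  also have "\<dots> = 0" using assms by simp
  finally show ?thesis .
qed

lemma phi_bloch:
  assumes "(cmod a)\<^sup>2 + (cmod b)\<^sup>2 = 1"
  shows "phi k11 k12 k21 k22 (bloch a b) =
     cnj a * a * k11 + cnj a * b * k12 + cnj b * a * k21 + cnj b * b * k22"
proof -
  have 1: "Complex (Re (cnj a * b)) (Im (cnj a * b)) = cnj a * b" by (rule complex_surj)
  have 2: "of_real ((cmod a)\<^sup>2) = cnj a * a" unfolding complex_norm_square by (rule mult.commute)
  have 3: "of_real (1 - (cmod a)\<^sup>2) = cnj b * b"
  proof -
    have e: "1 - (cmod a)\<^sup>2 = (cmod b)\<^sup>2" using assms by simp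
    show ?thesis unfolding e complex_norm_square by (rule mult.commute)
  qed
  show ?thesis unfolding phi_def bloch_def fst_conv snd_conv 1 2 3 by (simp add: mult.commute)
qed

lemma bloch_surj:
  assumes "qf s = 0"
  shows "\<exists>a b. (cmod a)\<^sup>2 + (cmod b)\<^sup>2 = 1 \<and> bloch a b = s"
proof -
  obtain P X Y where s: "s = (P,X,Y)" by (cases s) auto
  have eq: "X\<^sup>2 + Y\<^sup>2 = P * (1 - P)" using assms unfolding s qf_def by (simp add: algebra_simps power2_eq_square)
  have nn: "P * (1 - P) \<ge> 0" using eq[symmetric] by simp
  have P0: "P \<ge> 0"
  proof (rule ccontr)
    assume "\<not> P \<ge> 0" hence "P * (1 - P) < 0" by (simp add: mult_neg_pos)
    thus False using nn by simp
  qed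
  show ?thesis
  proof (cases "P = 0")
    case True
    hence "X\<^sup>2 + Y\<^sup>2 = 0" using eq by simp
    hence "X = 0" "Y = 0" by (auto simp: add_nonneg_eq_0_iff)
    thus ?thesis using True s by (intro exI[of _ 0] exI[of _ 1]) (simp add: bloch_def)
  next
    case False
    hence Pp: "P > 0" using P0 by simp
    define a where "a = complex_of_real (sqrt P)"
    define b where "b = Complex X Y / complex_of_real (sqrt P)"
    have ca: "(cmod a)\<^sup>2 = P" unfolding a_def using Pp by simp
    have cb: "(cmod b)\<^sup>2 = (X\<^sup>2 + Y\<^sup>2) / P" unfolding b_def using Pp
      by (simp add: norm_divide power_divide cmod_power2)
    have "(cmod b)\<^sup>2 = P * (1 - P) / P" using cb eq by simp
    also have "\<dots> = 1 - P" using Pp by simp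
    finally have "(cmod b)\<^sup>2 = 1 - P" .
    moreover have "cnj a * b = Complex X Y" unfolding a_def b_def using Pp by simp
    ultimately show ?thesis using ca s by (intro exI[of _ a] exI[of _ b]) (simp add: bloch_def)
  qed
qed


lemma orth_norm:
  assumes o1: "sesq e1 e1 = 1" and o2: "sesq e2 e2 = 1" and o12: "sesq e1 e2 = 0"
  shows "sesq (a *s e1 + b *s e2) (a *s e1 + b *s e2) = of_real ((cmod a)\<^sup>2 + (cmod b)\<^sup>2)"
proof -
  have o21: "sesq e2 e1 = 0" using sesq_cnj[of e2 e1] o12 by simp
  show ?thesis unfolding sesq_expand o1 o2 o12 o21
    by (simp only: of_real_add complex_norm_square) (simp add: mult.commute)
qed

lemma rep:
  fixes A :: "complex^'n^'n"
  assumes o1: "sesq e1 e1 = 1" and o2: "sesq e2 e2 = 1" and o12: "sesq e1 e2 = 0"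
    and ab: "(cmod a)\<^sup>2 + (cmod b)\<^sup>2 = 1"
  shows "norm (a *s e1 + b *s e2) = 1"
   and "cquad_form A (a *s e1 + b *s e2) = phi (sesq e1 (A *v e1)) (sesq e1 (A *v e2))
          (sesq e2 (A *v e1)) (sesq e2 (A *v e2)) (bloch a b)"
   and "(norm (A *v (a *s e1 + b *s e2)))\<^sup>2 = Re (phi (sesq (A *v e1) (A *v e1)) (sesq (A *v e1) (A *v e2))
          (sesq (A *v e2) (A *v e1)) (sesq (A *v e2) (A *v e2)) (bloch a b))"
proof -
  have "complex_of_real ((norm (a *s e1 + b *s e2))\<^sup>2) = of_real 1"
    using sesq_self[of "a *s e1 + b *s e2"] orth_norm[OF o1 o2 o12, of a b] ab by simp
  hence "(norm (a *s e1 + b *s e2))\<^sup>2 = 1" by (simp only: of_real_eq_iff)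
  thus "norm (a *s e1 + b *s e2) = 1" using norm_ge_zero[of "a *s e1 + b *s e2"]
    by (simp add: power2_eq_1_iff)
next
  show "cquad_form A (a *s e1 + b *s e2) = phi (sesq e1 (A *v e1)) (sesq e1 (A *v e2))
          (sesq e2 (A *v e1)) (sesq e2 (A *v e2)) (bloch a b)"
    unfolding cquad_sesq mv_lin sesq_expand phi_bloch[OF ab] ..
next
  have "complex_of_real ((norm (A *v (a *s e1 + b *s e2)))\<^sup>2) = sesq (A *v (a *s e1 + b *s e2)) (A *v (a *s e1 + b *s e2))"
    by (rule sesq_self[symmetric])
  also have "\<dots> = phi (sesq (A *v e1) (A *v e1)) (sesq (A *v e1) (A *v e2))
          (sesq (A *v e2) (A *v e1)) (sesq (A *v e2) (A *v e2)) (bloch a b)"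
    unfolding mv_lin sesq_expand phi_bloch[OF ab] ..
  finally show "(norm (A *v (a *s e1 + b *s e2)))\<^sup>2 = Re (phi (sesq (A *v e1) (A *v e1)) (sesq (A *v e1) (A *v e2))
          (sesq (A *v e2) (A *v e1)) (sesq (A *v e2) (A *v e2)) (bloch a b))"
    by (metis Re_complex_of_real)
qed

lemma key:
  fixes A :: "complex^'n^'n"
  assumes x: "norm x = 1" and y: "norm y = 1" and t: "0 \<le> t" "t \<le> 1"
  shows "\<exists>w. norm w = 1 \<and>
     cquad_form A w = of_real (1-t) * cquad_form A x + of_real t * cquad_form A y \<and>
     (1-t) * (norm (A *v x))\<^sup>2 + t * (norm (A *v y))\<^sup>2 \<le> (norm (A *v w))\<^sup>2"
proof -
  define \<sigma> where "\<sigma> = sesq x y"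
  define z where "z = y - \<sigma> *s x"
  have xx: "sesq x x = 1" using sesq_self[of x] x by simp
  show ?thesis
  proof (cases "z = 0")
    case True
    hence yx: "y = \<sigma> *s x + 0 *s x" unfolding z_def by (simp add: vec_eq_iff)
    have "complex_of_real 1 = sesq y y" using sesq_self[of y] y by simp
    also have "\<dots> = cnj \<sigma> * \<sigma>" by (subst (1 2) yx, simp only: sesq_expand xx, simp)
    finally have ss: "cnj \<sigma> * \<sigma> = 1" by simp
    hence ss': "\<sigma> * cnj \<sigma> = 1" by (simp add: mult.commute)
    have cq: "cquad_form A y = cquad_form A x"
      unfolding cquad_sesq by (subst (1 2) yx, simp only: mv_lin sesq_expand, simp add: ss ss' algebra_simps)
    have "complex_of_real ((norm (A *v y))\<^sup>2) = sesq (A *v y) (A *v y)" by (rule sesq_self[symmetric])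
    also have "\<dots> = sesq (A *v x) (A *v x)"
      by (subst (1 2) yx, simp only: mv_lin sesq_expand, simp add: ss ss' algebra_simps)
    also have "\<dots> = complex_of_real ((norm (A *v x))\<^sup>2)" by (rule sesq_self)
    finally have ny: "(norm (A *v y))\<^sup>2 = (norm (A *v x))\<^sup>2" by (simp only: of_real_eq_iff)
    show ?thesis
      by (rule exI[of _ x]) (simp add: x cq ny algebra_simps flip: of_real_add distrib_right)
  next
    case False
    define nz where "nz = norm z"
    have nzp: "nz > 0" using False nz_def by simp
    define e2 where "e2 = complex_of_real (1/nz) *s z + 0 *s z"
    have z2: "z = 1 *s y + (- \<sigma>) *s x" unfolding z_def by (simp add: vec_eq_iff)
    have xz: "sesq x z = 0" unfolding z2 sesq_lin_right xx \<sigma>_def by simp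
    have o12: "sesq x e2 = 0" unfolding e2_def sesq_lin_right xz by simp
    have zz: "sesq z z = of_real (nz\<^sup>2)" unfolding nz_def by (rule sesq_self)
    have o2: "sesq e2 e2 = 1" unfolding e2_def sesq_expand zz using nzp
      by (simp add: power2_eq_square flip: of_real_mult)
    have ye: "y = \<sigma> *s x + complex_of_real nz *s e2"
      unfolding e2_def z_def using nzp by (simp add: vec_eq_iff field_simps)
    have xe: "x = 1 *s x + 0 *s e2" by (simp add: vec_eq_iff)
    have "complex_of_real ((cmod \<sigma>)\<^sup>2 + (cmod (complex_of_real nz))\<^sup>2) = sesq y y"
      by (subst (1 2) ye, rule orth_norm[OF xx o2 o12, symmetric])
    also have "\<dots> = complex_of_real 1" using sesq_self[of y] y by simp
    finally have abv: "(cmod \<sigma>)\<^sup>2 + (cmod (complex_of_real nz))\<^sup>2 = 1" by (simp only: of_real_eq_iff)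
    have ab1: "(cmod (1::complex))\<^sup>2 + (cmod (0::complex))\<^sup>2 = 1" by simp
    define c11 where "c11 = sesq x (A *v x)"
    define c12 where "c12 = sesq x (A *v e2)"
    define c21 where "c21 = sesq e2 (A *v x)"
    define c22 where "c22 = sesq e2 (A *v e2)"
    define g11 where "g11 = sesq (A *v x) (A *v x)"
    define g12 where "g12 = sesq (A *v x) (A *v e2)"
    define g21 where "g21 = sesq (A *v e2) (A *v x)"
    define g22 where "g22 = sesq (A *v e2) (A *v e2)"
    note R1 = rep(1)[OF xx o2 o12]
    note R2 = rep(2)[OF xx o2 o12, where A=A, folded c11_def c12_def c21_def c22_def]
    note R3 = rep(3)[OF xx o2 o12, where A=A, folded g11_def g12_def g21_def g22_def]
    define u where "u = bloch 1 0"
    define v where "v = bloch \<sigma> (complex_of_real nz)"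
    have qu: "qf u = 0" unfolding u_def by (rule bloch_sph[OF ab1])
    have qv: "qf v = 0" unfolding v_def by (rule bloch_sph[OF abv])
    have cx: "cquad_form A x = phi c11 c12 c21 c22 u" unfolding u_def by (subst xe, rule R2[OF ab1])
    have cy: "cquad_form A y = phi c11 c12 c21 c22 v" unfolding v_def by (subst ye, rule R2[OF abv])
    have gx: "(norm (A *v x))\<^sup>2 = Re (phi g11 g12 g21 g22 u)" unfolding u_def by (subst xe, rule R3[OF ab1])
    have gy: "(norm (A *v y))\<^sup>2 = Re (phi g11 g12 g21 g22 v)" unfolding v_def by (subst ye, rule R3[OF abv])
    define s0 where "s0 = (1-t) *\<^sub>R u + t *\<^sub>R v"
    obtain s where s: "qf s = 0" "linphi c11 c12 c21 c22 s = linphi c11 c12 c21 c22 s0"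
        "Re (linphi g11 g12 g21 g22 s0) \<le> Re (linphi g11 g12 g21 g22 s)"
      using geom[OF linphi_linear Re_linear[OF linphi_linear] qu qv t,
          of c11 c12 c21 c22 g11 g12 g21 g22] unfolding s0_def by blast
    obtain a b where ab: "(cmod a)\<^sup>2 + (cmod b)\<^sup>2 = 1" "bloch a b = s" using bloch_surj[OF s(1)] by blast
    define w where "w = a *s x + b *s e2"
    have "norm w = 1" unfolding w_def by (rule R1[OF ab(1)])
    moreover have "cquad_form A w = of_real (1-t) * cquad_form A x + of_real t * cquad_form A y"
    proof -
      have "cquad_form A w = phi c11 c12 c21 c22 s" unfolding w_def using R2[OF ab(1)] ab(2) by simp
      also have "\<dots> = phi c11 c12 c21 c22 s0" unfolding phi_eq s(2) ..
      also have "\<dots> = of_real (1-t) * cquad_form A x + of_real t * cquad_form A y"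
        unfolding s0_def phi_affine cx cy ..
      finally show ?thesis .
    qed
    moreover have "(1-t) * (norm (A *v x))\<^sup>2 + t * (norm (A *v y))\<^sup>2 \<le> (norm (A *v w))\<^sup>2"
    proof -
      have "(1-t) * (norm (A *v x))\<^sup>2 + t * (norm (A *v y))\<^sup>2 = Re (phi g11 g12 g21 g22 s0)"
        unfolding s0_def phi_affine gx gy by simp
      also have "\<dots> = Re g22 + Re (linphi g11 g12 g21 g22 s0)" unfolding phi_eq by simp
      also have "\<dots> \<le> Re g22 + Re (linphi g11 g12 g21 g22 s)" using s(3) by simp
      also have "\<dots> = Re (phi g11 g12 g21 g22 s)" unfolding phi_eq by simp
      also have "\<dots> = (norm (A *v w))\<^sup>2" unfolding w_def using R3[OF ab(1)] ab(2) by simp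
      finally show ?thesis .
    qed
    ultimately show ?thesis by blast
  qed
qed


lemma W_ge_image:
  "W_ge r A = (\<lambda>x. (Re (cquad_form A x), Im (cquad_form A x))) ` {x. norm x = 1 \<and> r \<le> norm (A *v x)}"
proof (rule set_eqI, rule iffI)
  fix pq assume "pq \<in> W_ge r A"
  then obtain h x where hx: "pq = (Re (cquad_form A x), Im (cquad_form A x))" "h \<ge> r" "norm x = 1"
      "h\<^sup>2 = (norm (A *v x))\<^sup>2"
    unfolding W_ge_def DW_shell_def by auto
  have "h = norm (A *v x) \<or> h = - norm (A *v x)" using hx(4) by (simp add: power2_eq_iff)
  hence "h \<le> norm (A *v x)" by (metis neg_le_0_iff_le norm_ge_zero order.trans order_refl)
  thus "pq \<in> (\<lambda>x. (Re (cquad_form A x), Im (cquad_form A x))) ` {x. norm x = 1 \<and> r \<le> norm (A *v x)}"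
    using hx by auto
next
  fix pq assume "pq \<in> (\<lambda>x. (Re (cquad_form A x), Im (cquad_form A x))) ` {x. norm x = 1 \<and> r \<le> norm (A *v x)}"
  then obtain x where x: "pq = (Re (cquad_form A x), Im (cquad_form A x))" "norm x = 1" "r \<le> norm (A *v x)"
    by auto
  show "pq \<in> W_ge r A" unfolding W_ge_def DW_shell_def using x by blast
qed

theorem proposition1:
  fixes A :: "complex^'n^'n" and r :: real
  shows "compact (W_ge r A) \<and> convex (W_ge r A)"
proof
  define K where "K = {x :: complex^'n. norm x = 1 \<and> r \<le> norm (A *v x)}"
  define f where "f = (\<lambda>x. (Re (cquad_form A x), Im (cquad_form A x)))"
  have W: "W_ge r A = f ` K" unfolding K_def f_def by (rule W_ge_image)
  have "K = sphere 0 1 \<inter> {x. r \<le> norm (A *v x)}" unfolding K_def by auto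
  moreover have "closed {x. r \<le> norm (A *v x)}"
    by (rule closed_Collect_le) (auto simp: matrix_vector_mult_def intro!: continuous_intros)
  ultimately have cK: "compact K" by (simp add: compact_Int_closed)
  have "continuous_on K f"
    unfolding f_def cquad_form_def by (auto simp: matrix_vector_mult_def intro!: continuous_intros)
  thus "compact (W_ge r A)" unfolding W using cK by (rule compact_continuous_image)
  show "convex (W_ge r A)"
    unfolding convex_alt W
  proof (intro ballI allI impI)
    fix p q and t :: real assume p: "p \<in> f ` K" and q: "q \<in> f ` K" and t: "0 \<le> t \<and> t \<le> 1"
    obtain x where x: "p = f x" "norm x = 1" "r \<le> norm (A *v x)" using p unfolding K_def by auto
    obtain y where y: "q = f y" "norm y = 1" "r \<le> norm (A *v y)" using q unfolding K_def by auto
    obtain w where w: "norm w = 1"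
      "cquad_form A w = of_real (1-t) * cquad_form A x + of_real t * cquad_form A y"
      "(1-t) * (norm (A *v x))\<^sup>2 + t * (norm (A *v y))\<^sup>2 \<le> (norm (A *v w))\<^sup>2"
      using key[OF x(2) y(2), of t A] t by blast
    define m where "m = min (norm (A *v x)) (norm (A *v y))"
    have m0: "0 \<le> m" "r \<le> m" using x y unfolding m_def by auto
    have "m\<^sup>2 \<le> (norm (A *v x))\<^sup>2" "m\<^sup>2 \<le> (norm (A *v y))\<^sup>2"
      using m0 unfolding m_def by (auto intro!: power_mono)
    hence "(1-t) * m\<^sup>2 + t * m\<^sup>2 \<le> (1-t) * (norm (A *v x))\<^sup>2 + t * (norm (A *v y))\<^sup>2"
      using t by (intro add_mono mult_left_mono) auto
    hence "m\<^sup>2 \<le> (norm (A *v w))\<^sup>2" using w(3) by (simp add: algebra_simps)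
    hence "m \<le> norm (A *v w)" by (rule power2_le_imp_le) simp
    hence wK: "w \<in> K" unfolding K_def using w(1) m0 by simp
    have "(1 - t) *\<^sub>R p + t *\<^sub>R q = f w" unfolding x(1) y(1) f_def w(2) by simp
    thus "(1 - t) *\<^sub>R p + t *\<^sub>R q \<in> f ` K" using wK by blast
  qed
qed

end
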